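(* Assume (A1) and fix all parameters $A,c,\gamma,\omega,h,d,\sigma,\mu,F^*$ and $b$. Let $\mathcal{B}=\{\beta>0:\ \text{conditions (C1)--(C4) hold with } E=\mu\sigma(1-2b^2\beta)\}$. Then $\mathcal{B}$ is either empty or an open interval $(\beta_a,\beta_b)$ with $0\le\beta_a<\beta_b\le 1/(2b^2)$; in particular $\mathcal{B}\ne(0,+\infty)$. Each of the three possibilities — $\mathcal{B}=\emptyset$ ("neutral", unconditionally unstable), $\mathcal{B}=(0,\beta_b)$ ("destabilizing"), and $\mathcal{B}=(\beta_a,\beta_b)$ with $\beta_a>0$ ("mixed") — occurs for suitable values of the fixed parameters satisfying (A1). The same statement holds with the roles of $\beta$ and $b$ exchanged: fixing $\beta$, the set $\{b>0: \text{(C1)--(C4) hold}\}$ is empty or an open interval $(b_a,b_b)$ with $0\le b_a<b_b\le 1/\sqrt{2\beta}$, and the three possibilities all occur.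
   Context: Parameters: $c\in(0,1)$, $\gamma>0$, $\omega\in[0,1]$, $h>0$, $d>0$, $\sigma>0$, $\mu>0$, $b>0$, $\beta>0$ (also $A>0,F^*>0$, which do not enter the conditions). Assumption (A1): $1-c-hd>0$. For a real number $E$, conditions (C1)--(C4) are: (C1) $E>0$ (equivalently, when $E=\mu\sigma(1-2b^2\beta)$, $2b^2\beta-1<0$); (C2) $(2-E)(1+c+2\gamma)-\omega^2dhE>0$; (C3) $1-c+cE+\omega^2dhE+\gamma c-E\gamma-E\gamma c+E^2\gamma-E^2\gamma^2+E\gamma^2-\gamma>0$; (C4) $2\gamma+c-cE-\gamma E-\omega^2dhE<3$. These are the conditions guaranteeing that all eigenvalues of the Jacobian matrix $\begin{pmatrix}c+\gamma&\omega h&-\gamma\\ \omega dE&1-E&0\\1&0&0\end{pmatrix}$ (the Jacobian, at the unbiased steady state $S^*$, of the model map) lie in the open unit disk. *)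

theory Defs
  imports Complex_Main
begin

text \<open>Standing parameter constraints, including assumption (A1): 1 - c - h d > 0.\<close>
definition params_ok :: "real \<Rightarrow> real \<Rightarrow> real \<Rightarrow> real \<Rightarrow> real \<Rightarrow> real \<Rightarrow> real \<Rightarrow> bool" where
  "params_ok c \<gamma> \<omega> h d \<sigma> \<mu> \<longleftrightarrow>
     0 < c \<and> c < 1 \<and> 0 < \<gamma> \<and> 0 \<le> \<omega> \<and> \<omega> \<le> 1 \<and> 0 < h \<and> 0 < d \<and> 0 < \<sigma> \<and> 0 < \<mu>
     \<and> 1 - c - h * d > 0"

definition C1 :: "real \<Rightarrow> bool" where
  "C1 E \<longleftrightarrow> E > 0"

definition C2 :: "real \<Rightarrow> real \<Rightarrow> real \<Rightarrow> real \<Rightarrow> real \<Rightarrow> real \<Rightarrow> bool" where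
  "C2 c \<gamma> \<omega> h d E \<longleftrightarrow> (2 - E) * (1 + c + 2 * \<gamma>) - \<omega>^2 * d * h * E > 0"

definition C3 :: "real \<Rightarrow> real \<Rightarrow> real \<Rightarrow> real \<Rightarrow> real \<Rightarrow> real \<Rightarrow> bool" where
  "C3 c \<gamma> \<omega> h d E \<longleftrightarrow>
     1 - c + c * E + \<omega>^2 * d * h * E + \<gamma> * c - E * \<gamma> - E * \<gamma> * c + E^2 * \<gamma>
       - E^2 * \<gamma>^2 + E * \<gamma>^2 - \<gamma> > 0"

definition C4 :: "real \<Rightarrow> real \<Rightarrow> real \<Rightarrow> real \<Rightarrow> real \<Rightarrow> real \<Rightarrow> bool" where
  "C4 c \<gamma> \<omega> h d E \<longleftrightarrow> 2 * \<gamma> + c - c * E - \<gamma> * E - \<omega>^2 * d * h * E < 3"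

definition conds :: "real \<Rightarrow> real \<Rightarrow> real \<Rightarrow> real \<Rightarrow> real \<Rightarrow> real \<Rightarrow> bool" where
  "conds c \<gamma> \<omega> h d E \<longleftrightarrow> C1 E \<and> C2 c \<gamma> \<omega> h d E \<and> C3 c \<gamma> \<omega> h d E \<and> C4 c \<gamma> \<omega> h d E"

definition Eval :: "real \<Rightarrow> real \<Rightarrow> real \<Rightarrow> real \<Rightarrow> real" where
  "Eval \<sigma> \<mu> b \<beta> = \<mu> * \<sigma> * (1 - 2 * b^2 * \<beta>)"

definition beta_set :: "real \<Rightarrow> real \<Rightarrow> real \<Rightarrow> real \<Rightarrow> real \<Rightarrow> real \<Rightarrow> real \<Rightarrow> real \<Rightarrow> real set" where
  "beta_set c \<gamma> \<omega> h d \<sigma> \<mu> b = {\<beta>. \<beta> > 0 \<and> conds c \<gamma> \<omega> h d (Eval \<sigma> \<mu> b \<beta>)}"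

definition b_set :: "real \<Rightarrow> real \<Rightarrow> real \<Rightarrow> real \<Rightarrow> real \<Rightarrow> real \<Rightarrow> real \<Rightarrow> real \<Rightarrow> real set" where
  "b_set c \<gamma> \<omega> h d \<sigma> \<mu> \<beta> = {b. b > 0 \<and> conds c \<gamma> \<omega> h d (Eval \<sigma> \<mu> b \<beta>)}"

end

theory Submission imports Defs begin

lemma C3_pos_small:
  fixes c g k y :: real
  assumes "0<c" "c<1" "0<g" "g<1" "0\<le>k" "0<y"
  shows "0 < (1-c)*(1-g) + y*((1-g)*(c-g)+k) + y^2*(g*(1-g))"
proof (cases "(1-g)*(c-g)+k \<ge> 0")
  case True
  have "0 < (1-c)*(1-g)" using assms by simp
  moreover have "y*((1-g)*(c-g)+k) \<ge> 0" using True assms by simp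
  moreover have "y^2*(g*(1-g)) \<ge> 0" using assms by simp
  ultimately show ?thesis by linarith
next
  case False
  define a where "a = g*(1-g)"
  define B where "B = (1-g)*(c-g)+k"
  define C where "C = (1-c)*(1-g)"
  have a: "a>0" using assms a_def by simp
  have gc: "g > c" using False assms by (smt (verit) mult_nonneg_nonneg)
  have B0: "-((1-g)*(c-g)) = (1-g)*(g-c)" by (simp add: algebra_simps)
  have B1: "-B \<le> (1-g)*(g-c)" using assms B_def B0 by linarith
  have B2: "-B > 0" using False B_def by simp
  have h1: "(g-c)^2 < 4*g*(1-c)"
  proof -
    have "(g-c)^2 = (g-c)*(g-c)" by (simp add: power2_eq_square)
    also have "... < (1-c)*(4*g)" using gc assms by (intro mult_strict_mono) auto
    finally show ?thesis by (simp add: mult_ac)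
  qed
  have "(-B)^2 \<le> ((1-g)*(g-c))^2" using B1 B2 by (intro power_mono) auto
  then have "B^2 \<le> ((1-g)*(g-c))^2" by simp
  also have "... = (1-g)^2*(g-c)^2" by (simp add: power_mult_distrib)
  also have "... < (1-g)^2*(4*g*(1-c))" using h1 assms by (intro mult_strict_left_mono) auto
  finally have disc: "B^2 < 4*a*C" unfolding a_def C_def by (simp add: power2_eq_square algebra_simps)
  have "4*a*(a*y^2 + B*y + C) = (2*a*y+B)^2 + (4*a*C - B^2)" by (simp add: power2_eq_square algebra_simps)
  also have "... > 0" using disc by (smt (verit) zero_le_power2)
  finally have "a*y^2 + B*y + C > 0" using a by (smt (verit) mult_pos_pos mult_nonneg_nonpos zero_less_mult_iff)
  then show ?thesis unfolding a_def B_def C_def by (simp add: algebra_simps)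
qed

lemma C3_conv:
  assumes p: "params_ok c \<gamma> \<omega> h d \<sigma> \<mu>" and xy: "0<x" "x<y" "y<z"
    and cx: "C3 c \<gamma> \<omega> h d x" and cz: "C3 c \<gamma> \<omega> h d z"
  shows "C3 c \<gamma> \<omega> h d y"
proof -
  define k where "k = \<omega>^2*d*h"
  have k: "k \<ge> 0" using p unfolding params_ok_def k_def by simp
  define q where "q = (\<lambda>E. (1-c)*(1-\<gamma>) + E*((1-\<gamma>)*(c-\<gamma>)+k) + E^2*(\<gamma>*(1-\<gamma>)))"
  have eq: "\<And>E. C3 c \<gamma> \<omega> h d E \<longleftrightarrow> q E > 0"
    unfolding C3_def q_def k_def by (simp add: algebra_simps power2_eq_square)
  show ?thesis
  proof (cases "\<gamma> < 1")
    case True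
    then show ?thesis using p xy k unfolding eq q_def params_ok_def
      by (intro C3_pos_small) auto
  next
    case False
    define a where "a = \<gamma>*(1-\<gamma>)"
    have a: "a \<le> 0" using False p unfolding a_def params_ok_def by (simp add: mult_nonneg_nonpos)
    have id: "q y * (z-x) = (z-y)*q x + (y-x)*q z + (-a)*((y-x)*(z-y)*(z-x))"
      unfolding q_def a_def by (simp add: power2_eq_square algebra_simps)
    have "(z-y)*q x > 0" "(y-x)*q z > 0" using cx cz xy eq by auto
    moreover have "(y-x)*(z-y)*(z-x) \<ge> 0" using xy by simp
    then have "(-a)*((y-x)*(z-y)*(z-x)) \<ge> 0" using a by (metis mult_nonneg_nonneg neg_0_le_iff_le)
    ultimately have "q y * (z-x) > 0" using id by linarith
    then have "q y > 0" using xy by (simp add: zero_less_mult_iff)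
    then show ?thesis using eq by simp
  qed
qed

lemma conds_conv:
  assumes p: "params_ok c \<gamma> \<omega> h d \<sigma> \<mu>" and xy: "x<y" "y<z"
    and cx: "conds c \<gamma> \<omega> h d x" and cz: "conds c \<gamma> \<omega> h d z"
  shows "conds c \<gamma> \<omega> h d y"
proof -
  define k where "k = \<omega>^2*d*h"
  have k: "k \<ge> 0" using p unfolding params_ok_def k_def by simp
  have c1: "C1 y" using cx xy unfolding conds_def C1_def by simp
  have c3: "C3 c \<gamma> \<omega> h d y" using C3_conv[OF p _ xy] cx cz unfolding conds_def C1_def by auto
  have A: "1+c+2*\<gamma> + k > 0" using p k unfolding params_ok_def by simp
  have "(2 - z) * (1 + c + 2 * \<gamma>) - k * z > 0" using cz unfolding conds_def C2_def k_def by simp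
  moreover have "((2 - y) * (1 + c + 2 * \<gamma>) - k * y) - ((2 - z) * (1 + c + 2 * \<gamma>) - k * z) = (z-y)*(1+c+2*\<gamma> + k)"
    by (simp add: algebra_simps)
  moreover have "(z-y)*(1+c+2*\<gamma> + k) > 0" using A xy by simp
  ultimately have c2: "C2 c \<gamma> \<omega> h d y" unfolding C2_def k_def by linarith
  have B: "c+\<gamma>+k > 0" using p k unfolding params_ok_def by simp
  have "2 * \<gamma> + c - c * x - \<gamma> * x - k * x < 3" using cx unfolding conds_def C4_def k_def by simp
  moreover have "(2 * \<gamma> + c - c * x - \<gamma> * x - k * x) - (2 * \<gamma> + c - c * y - \<gamma> * y - k * y) = (y-x)*(c+\<gamma>+k)"
    by (simp add: algebra_simps)
  moreover have "(y-x)*(c+\<gamma>+k) > 0" using B xy by simp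
  ultimately have c4: "C4 c \<gamma> \<omega> h d y" unfolding C4_def k_def by linarith
  show ?thesis using c1 c2 c3 c4 unfolding conds_def by simp
qed

lemma interval_lemma:
  fixes T :: "real set"
  assumes op: "open T" and bd: "\<And>x. x\<in>T \<Longrightarrow> 0<x \<and> x<M"
    and cv: "\<And>x y z. x\<in>T \<Longrightarrow> z\<in>T \<Longrightarrow> x<y \<Longrightarrow> y<z \<Longrightarrow> y\<in>T"
  shows "T = {} \<or> (\<exists>a b. 0\<le>a \<and> a<b \<and> b\<le>M \<and> T = {a<..<b})"
proof (cases "T = {}")
  case True then show ?thesis by simp
next
  case False
  have bb: "bdd_below T" using bd by (meson bdd_belowI less_imp_le)
  have ba: "bdd_above T" using bd by (meson bdd_aboveI less_imp_le)
  have mem: "x \<in> T \<Longrightarrow> Inf T < x \<and> x < Sup T" for x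
  proof -
    assume x: "x\<in>T"
    obtain e where e: "e>0" "\<And>y. dist y x < e \<Longrightarrow> y \<in> T" using op x unfolding open_dist by blast
    have "x - e/2 \<in> T" "x + e/2 \<in> T" using e by (auto simp: dist_real_def)
    then have "Inf T \<le> x - e/2" "x + e/2 \<le> Sup T" using bb ba by (auto intro: cInf_lower cSup_upper)
    then show ?thesis using e by simp
  qed
  have T: "T = {Inf T<..<Sup T}"
  proof
    show "T \<subseteq> {Inf T<..<Sup T}" using mem by auto
    show "{Inf T<..<Sup T} \<subseteq> T"
    proof
      fix y assume "y \<in> {Inf T<..<Sup T}"
      then have y: "Inf T < y" "y < Sup T" by auto
      obtain x where "x\<in>T" "x<y" using y(1) False bb by (meson cInf_less_iff)
      moreover obtain z where "z\<in>T" "y<z" using y(2) False ba by (meson less_cSup_iff)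
      ultimately show "y \<in> T" using cv by blast
    qed
  qed
  obtain x where x: "x \<in> T" using False by auto
  have "0 \<le> Inf T" using False bd by (meson cInf_greatest less_imp_le)
  moreover have "Sup T \<le> M" using False bd by (meson cSup_least less_imp_le)
  moreover have "Inf T < Sup T" using mem[OF x] by simp
  ultimately show ?thesis using T by blast
qed


lemma open_beta: "open (beta_set c \<gamma> \<omega> h d \<sigma> \<mu> b)"
  unfolding beta_set_def conds_def C1_def C2_def C3_def C4_def Eval_def
  by (intro open_Collect_conj open_Collect_less continuous_intros)

lemma open_b: "open (b_set c \<gamma> \<omega> h d \<sigma> \<mu> \<beta>)"
  unfolding b_set_def conds_def C1_def C2_def C3_def C4_def Eval_def
  by (intro open_Collect_conj open_Collect_less continuous_intros)

lemma Eval_diff: "Eval \<sigma> \<mu> b x - Eval \<sigma> \<mu> b' y = \<mu>*\<sigma>*2*(b'^2*y - b^2*x)"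
  unfolding Eval_def by (simp add: algebra_simps)

lemma part_beta:
  assumes p: "params_ok c \<gamma> \<omega> h d \<sigma> \<mu>" and b: "b > 0"
  shows "(beta_set c \<gamma> \<omega> h d \<sigma> \<mu> b = {} \<or>
       (\<exists>\<beta>a \<beta>b. 0 \<le> \<beta>a \<and> \<beta>a < \<beta>b \<and> \<beta>b \<le> 1 / (2 * b^2) \<and>
                 beta_set c \<gamma> \<omega> h d \<sigma> \<mu> b = {\<beta>a<..<\<beta>b}))
      \<and> beta_set c \<gamma> \<omega> h d \<sigma> \<mu> b \<noteq> {0<..}"
proof -
  let ?T = "beta_set c \<gamma> \<omega> h d \<sigma> \<mu> b"
  let ?M = "1 / (2 * b^2)"
  have ms: "\<mu>*\<sigma> > 0" using p unfolding params_ok_def by simp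
  have b2: "b^2 > 0" using b by simp
  have bd: "0 < x \<and> x < ?M" if "x \<in> ?T" for x
  proof -
    have "x > 0" "Eval \<sigma> \<mu> b x > 0" using that unfolding beta_set_def conds_def C1_def by auto
    then have "1 - 2*b^2*x > 0" using ms unfolding Eval_def by (simp add: zero_less_mult_iff)
    then have "x < ?M" using b2 by (simp add: field_simps)
    then show ?thesis using \<open>x>0\<close> by simp
  qed
  have cv: "y \<in> ?T" if "x \<in> ?T" "z \<in> ?T" "x < y" "y < z" for x y z
  proof -
    have mu: "\<mu>>0" "\<sigma>>0" using p unfolding params_ok_def by auto
    have d1: "b^2*y - b^2*x > 0" "b^2*z - b^2*y > 0" using b2 that by simp_all
    have "Eval \<sigma> \<mu> b x - Eval \<sigma> \<mu> b y > 0" "Eval \<sigma> \<mu> b y - Eval \<sigma> \<mu> b z > 0"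
      unfolding Eval_diff using mu d1 by (intro mult_pos_pos; simp)+
    then have "conds c \<gamma> \<omega> h d (Eval \<sigma> \<mu> b y)"
      using conds_conv[OF p, of "Eval \<sigma> \<mu> b z" "Eval \<sigma> \<mu> b y" "Eval \<sigma> \<mu> b x"] that
      unfolding beta_set_def by auto
    then show ?thesis using that unfolding beta_set_def by auto
  qed
  have A: "?T = {} \<or> (\<exists>a b'. 0\<le>a \<and> a<b' \<and> b'\<le>?M \<and> ?T = {a<..<b'})"
    by (rule interval_lemma[OF open_beta bd cv]) auto
  have "?M \<notin> ?T" using bd by blast
  moreover have "?M \<in> {0<..}" using b2 by simp
  ultimately show ?thesis using A by blast
qed

lemma part_b:
  assumes p: "params_ok c \<gamma> \<omega> h d \<sigma> \<mu>" and be: "\<beta> > 0"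
  shows "(b_set c \<gamma> \<omega> h d \<sigma> \<mu> \<beta> = {} \<or>
       (\<exists>ba bb. 0 \<le> ba \<and> ba < bb \<and> bb \<le> 1 / sqrt (2 * \<beta>) \<and>
                 b_set c \<gamma> \<omega> h d \<sigma> \<mu> \<beta> = {ba<..<bb}))
      \<and> b_set c \<gamma> \<omega> h d \<sigma> \<mu> \<beta> \<noteq> {0<..}"
proof -
  let ?T = "b_set c \<gamma> \<omega> h d \<sigma> \<mu> \<beta>"
  let ?M = "1 / sqrt (2 * \<beta>)"
  have ms: "\<mu>*\<sigma> > 0" using p unfolding params_ok_def by simp
  have bd: "0 < x \<and> x < ?M" if "x \<in> ?T" for x
  proof -
    have "x > 0" "Eval \<sigma> \<mu> x \<beta> > 0" using that unfolding b_set_def conds_def C1_def by auto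
    then have "1 - 2*x^2*\<beta> > 0" using ms unfolding Eval_def by (simp add: zero_less_mult_iff)
    then have "x^2 < 1/(2*\<beta>)" using be by (simp add: field_simps)
    then have "sqrt (x^2) < sqrt (1/(2*\<beta>))" by (simp only: real_sqrt_less_iff)
    then have "x < ?M" using \<open>x>0\<close> by (simp add: real_sqrt_divide)
    then show ?thesis using \<open>x>0\<close> by simp
  qed
  have cv: "y \<in> ?T" if "x \<in> ?T" "z \<in> ?T" "x < y" "y < z" for x y z
  proof -
    have x0: "x > 0" using that unfolding b_set_def by auto
    have s1: "x^2 < y^2" "y^2 < z^2" using x0 that by (auto intro!: power_strict_mono)
    have mu: "\<mu>>0" "\<sigma>>0" using p unfolding params_ok_def by auto
    have d1: "y^2*\<beta> - x^2*\<beta> > 0" "z^2*\<beta> - y^2*\<beta> > 0" using be s1 by simp_all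
    have "Eval \<sigma> \<mu> x \<beta> - Eval \<sigma> \<mu> y \<beta> > 0" "Eval \<sigma> \<mu> y \<beta> - Eval \<sigma> \<mu> z \<beta> > 0"
      unfolding Eval_diff using mu d1 by (intro mult_pos_pos; simp)+
    then have "conds c \<gamma> \<omega> h d (Eval \<sigma> \<mu> y \<beta>)"
      using conds_conv[OF p, of "Eval \<sigma> \<mu> z \<beta>" "Eval \<sigma> \<mu> y \<beta>" "Eval \<sigma> \<mu> x \<beta>"] that
      unfolding b_set_def by auto
    then show ?thesis using that x0 unfolding b_set_def by auto
  qed
  have A: "?T = {} \<or> (\<exists>a b'. 0\<le>a \<and> a<b' \<and> b'\<le>?M \<and> ?T = {a<..<b'})"
    by (rule interval_lemma[OF open_b bd cv]) auto
  have "?M \<notin> ?T" using bd by blast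
  moreover have "?M \<in> {0<..}" using be by simp
  ultimately show ?thesis using A by blast
qed

lemma pok: "params_ok (1/2) \<gamma> 0 (1/4) 1 1 \<mu>" if "\<gamma>>0" "\<mu>>0"
  using that unfolding params_ok_def by simp

lemma conds_ex: "conds (1/2) (1/2) 0 (1/4) 1 E \<longleftrightarrow> 0<E \<and> E<2"
proof -
  have "0 \<le> E*E" by simp
  then show ?thesis unfolding conds_def C1_def C2_def C3_def C4_def
    by (auto simp: algebra_simps power2_eq_square) (use \<open>0 \<le> E*E\<close> in linarith)
qed

lemma conds_empty: "\<not> conds (1/2) 1 0 (1/4) 1 E"
  unfolding conds_def C3_def by (simp add: algebra_simps power2_eq_square)

lemma sqless: "0\<le>a \<Longrightarrow> 0\<le>b \<Longrightarrow> (a::real)^2 < b^2 \<longleftrightarrow> a < b"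
  using power_strict_mono[of a b 2] power_less_imp_less_base[of a 2 b] by auto

lemma ex1: "beta_set (1/2) 1 0 (1/4) 1 1 1 1 = {}"
  unfolding beta_set_def using conds_empty by auto
lemma ex2: "beta_set (1/2) (1/2) 0 (1/4) 1 1 1 1 = {0<..<1/2}"
  unfolding beta_set_def conds_ex Eval_def by auto
lemma ex3: "beta_set (1/2) (1/2) 0 (1/4) 1 1 3 1 = {1/6<..<1/2}"
  unfolding beta_set_def conds_ex Eval_def by auto
lemma ex4: "b_set (1/2) 1 0 (1/4) 1 1 1 (1/2) = {}"
  unfolding b_set_def using conds_empty by auto
lemma ex5: "b_set (1/2) (1/2) 0 (1/4) 1 1 1 (1/2) = {0<..<1}"
proof -
  have "b>0 \<Longrightarrow> b^2 < 1 \<longleftrightarrow> b < 1" for b :: real using sqless[of b 1] by simp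
  moreover have "\<And>b::real. 0 \<le> b^2" by simp
  ultimately show ?thesis unfolding b_set_def conds_ex Eval_def by (auto; smt (verit))
qed
lemma ex6: "b_set (1/2) (1/2) 0 (1/4) 1 1 (8/3) (1/2) = {1/2<..<1}"
proof -
  have a: "b>0 \<Longrightarrow> b^2 < 1 \<longleftrightarrow> b < 1" for b :: real using sqless[of b 1] by simp
  have c: "b>0 \<Longrightarrow> 1/4 < b^2 \<longleftrightarrow> 1/2 < b" for b :: real using sqless[of "1/2" b] by (simp add: power_divide)
  show ?thesis unfolding b_set_def conds_ex Eval_def
    using a c by (auto simp: field_simps)
qed

theorem proposition5:
  shows
  \<comment> \<open>beta-set: empty or an open interval inside (0, 1/(2b^2)], never (0,+inf)\<close>
  "(\<forall>c \<gamma> \<omega> h d \<sigma> \<mu> b. params_ok c \<gamma> \<omega> h d \<sigma> \<mu> \<and> b > 0 \<longrightarrow>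
      (beta_set c \<gamma> \<omega> h d \<sigma> \<mu> b = {} \<or>
       (\<exists>\<beta>a \<beta>b. 0 \<le> \<beta>a \<and> \<beta>a < \<beta>b \<and> \<beta>b \<le> 1 / (2 * b^2) \<and>
                 beta_set c \<gamma> \<omega> h d \<sigma> \<mu> b = {\<beta>a<..<\<beta>b}))
      \<and> beta_set c \<gamma> \<omega> h d \<sigma> \<mu> b \<noteq> {0<..})
   \<and> (\<exists>c \<gamma> \<omega> h d \<sigma> \<mu> b. params_ok c \<gamma> \<omega> h d \<sigma> \<mu> \<and> b > 0 \<and>
        beta_set c \<gamma> \<omega> h d \<sigma> \<mu> b = {})
   \<and> (\<exists>c \<gamma> \<omega> h d \<sigma> \<mu> b \<beta>b. params_ok c \<gamma> \<omega> h d \<sigma> \<mu> \<and> b > 0 \<and> 0 < \<beta>b \<and>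
        beta_set c \<gamma> \<omega> h d \<sigma> \<mu> b = {0<..<\<beta>b})
   \<and> (\<exists>c \<gamma> \<omega> h d \<sigma> \<mu> b \<beta>a \<beta>b. params_ok c \<gamma> \<omega> h d \<sigma> \<mu> \<and> b > 0 \<and> 0 < \<beta>a \<and> \<beta>a < \<beta>b \<and>
        beta_set c \<gamma> \<omega> h d \<sigma> \<mu> b = {\<beta>a<..<\<beta>b})
  \<comment> \<open>b-set: same with roles of beta and b exchanged\<close>
   \<and> (\<forall>c \<gamma> \<omega> h d \<sigma> \<mu> \<beta>. params_ok c \<gamma> \<omega> h d \<sigma> \<mu> \<and> \<beta> > 0 \<longrightarrow>
      (b_set c \<gamma> \<omega> h d \<sigma> \<mu> \<beta> = {} \<or>
       (\<exists>ba bb. 0 \<le> ba \<and> ba < bb \<and> bb \<le> 1 / sqrt (2 * \<beta>) \<and>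
                 b_set c \<gamma> \<omega> h d \<sigma> \<mu> \<beta> = {ba<..<bb}))
      \<and> b_set c \<gamma> \<omega> h d \<sigma> \<mu> \<beta> \<noteq> {0<..})
   \<and> (\<exists>c \<gamma> \<omega> h d \<sigma> \<mu> \<beta>. params_ok c \<gamma> \<omega> h d \<sigma> \<mu> \<and> \<beta> > 0 \<and>
        b_set c \<gamma> \<omega> h d \<sigma> \<mu> \<beta> = {})
   \<and> (\<exists>c \<gamma> \<omega> h d \<sigma> \<mu> \<beta> bb. params_ok c \<gamma> \<omega> h d \<sigma> \<mu> \<and> \<beta> > 0 \<and> 0 < bb \<and>
        b_set c \<gamma> \<omega> h d \<sigma> \<mu> \<beta> = {0<..<bb})
   \<and> (\<exists>c \<gamma> \<omega> h d \<sigma> \<mu> \<beta> ba bb. params_ok c \<gamma> \<omega> h d \<sigma> \<mu> \<and> \<beta> > 0 \<and> 0 < ba \<and> ba < bb \<and>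
        b_set c \<gamma> \<omega> h d \<sigma> \<mu> \<beta> = {ba<..<bb})"
proof (intro conjI)
  have p1: "params_ok (1/2) 1 0 (1/4) 1 1 1" by (rule pok) auto
  have p2: "params_ok (1/2) (1/2) 0 (1/4) 1 1 1" by (rule pok) auto
  have p3: "params_ok (1/2) (1/2) 0 (1/4) 1 1 3" by (rule pok) auto
  have p4: "params_ok (1/2) (1/2) 0 (1/4) 1 1 (8/3)" by (rule pok) auto
  show "\<forall>c \<gamma> \<omega> h d \<sigma> \<mu> b. params_ok c \<gamma> \<omega> h d \<sigma> \<mu> \<and> b > 0 \<longrightarrow>
      (beta_set c \<gamma> \<omega> h d \<sigma> \<mu> b = {} \<or>
       (\<exists>\<beta>a \<beta>b. 0 \<le> \<beta>a \<and> \<beta>a < \<beta>b \<and> \<beta>b \<le> 1 / (2 * b^2) \<and>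
                 beta_set c \<gamma> \<omega> h d \<sigma> \<mu> b = {\<beta>a<..<\<beta>b}))
      \<and> beta_set c \<gamma> \<omega> h d \<sigma> \<mu> b \<noteq> {0<..}" using part_beta by blast
  show "\<forall>c \<gamma> \<omega> h d \<sigma> \<mu> \<beta>. params_ok c \<gamma> \<omega> h d \<sigma> \<mu> \<and> \<beta> > 0 \<longrightarrow>
      (b_set c \<gamma> \<omega> h d \<sigma> \<mu> \<beta> = {} \<or>
       (\<exists>ba bb. 0 \<le> ba \<and> ba < bb \<and> bb \<le> 1 / sqrt (2 * \<beta>) \<and>
                 b_set c \<gamma> \<omega> h d \<sigma> \<mu> \<beta> = {ba<..<bb}))
      \<and> b_set c \<gamma> \<omega> h d \<sigma> \<mu> \<beta> \<noteq> {0<..}" using part_b by blast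
  show "\<exists>c \<gamma> \<omega> h d \<sigma> \<mu> b. params_ok c \<gamma> \<omega> h d \<sigma> \<mu> \<and> b > 0 \<and>
        beta_set c \<gamma> \<omega> h d \<sigma> \<mu> b = {}" by (rule exI[of _ "1/2"], rule exI[of _ 1], rule exI[of _ 0], rule exI[of _ "1/4"],
        rule exI[of _ 1], rule exI[of _ 1], rule exI[of _ 1], rule exI[of _ 1])
       (simp add: p1 ex1)
  show "\<exists>c \<gamma> \<omega> h d \<sigma> \<mu> b \<beta>b. params_ok c \<gamma> \<omega> h d \<sigma> \<mu> \<and> b > 0 \<and> 0 < \<beta>b \<and>
        beta_set c \<gamma> \<omega> h d \<sigma> \<mu> b = {0<..<\<beta>b}"
    by (rule exI[of _ "1/2"], rule exI[of _ "1/2"], rule exI[of _ 0], rule exI[of _ "1/4"],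
        rule exI[of _ 1], rule exI[of _ 1], rule exI[of _ 1], rule exI[of _ 1], rule exI[of _ "1/2"])
       (simp add: p2 ex2)
  show "\<exists>c \<gamma> \<omega> h d \<sigma> \<mu> b \<beta>a \<beta>b. params_ok c \<gamma> \<omega> h d \<sigma> \<mu> \<and> b > 0 \<and> 0 < \<beta>a \<and> \<beta>a < \<beta>b \<and>
        beta_set c \<gamma> \<omega> h d \<sigma> \<mu> b = {\<beta>a<..<\<beta>b}"
    by (rule exI[of _ "1/2"], rule exI[of _ "1/2"], rule exI[of _ 0], rule exI[of _ "1/4"],
        rule exI[of _ 1], rule exI[of _ 1], rule exI[of _ 3], rule exI[of _ 1], rule exI[of _ "1/6"],
        rule exI[of _ "1/2"])
       (simp add: p3 ex3)
  show "\<exists>c \<gamma> \<omega> h d \<sigma> \<mu> \<beta>. params_ok c \<gamma> \<omega> h d \<sigma> \<mu> \<and> \<beta> > 0 \<and>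
        b_set c \<gamma> \<omega> h d \<sigma> \<mu> \<beta> = {}" by (rule exI[of _ "1/2"], rule exI[of _ 1], rule exI[of _ 0], rule exI[of _ "1/4"],
        rule exI[of _ 1], rule exI[of _ 1], rule exI[of _ 1], rule exI[of _ "1/2"])
       (simp add: p1 ex4)
  show "\<exists>c \<gamma> \<omega> h d \<sigma> \<mu> \<beta> bb. params_ok c \<gamma> \<omega> h d \<sigma> \<mu> \<and> \<beta> > 0 \<and> 0 < bb \<and>
        b_set c \<gamma> \<omega> h d \<sigma> \<mu> \<beta> = {0<..<bb}"
    by (rule exI[of _ "1/2"], rule exI[of _ "1/2"], rule exI[of _ 0], rule exI[of _ "1/4"],
        rule exI[of _ 1], rule exI[of _ 1], rule exI[of _ 1], rule exI[of _ "1/2"], rule exI[of _ 1])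
       (simp add: p2 ex5)
  show "\<exists>c \<gamma> \<omega> h d \<sigma> \<mu> \<beta> ba bb. params_ok c \<gamma> \<omega> h d \<sigma> \<mu> \<and> \<beta> > 0 \<and> 0 < ba \<and> ba < bb \<and>
        b_set c \<gamma> \<omega> h d \<sigma> \<mu> \<beta> = {ba<..<bb}"
    by (rule exI[of _ "1/2"], rule exI[of _ "1/2"], rule exI[of _ 0], rule exI[of _ "1/4"],
        rule exI[of _ 1], rule exI[of _ 1], rule exI[of _ "8/3"], rule exI[of _ "1/2"], rule exI[of _ "1/2"],
        rule exI[of _ 1])
       (simp add: p4 ex6)
qed

end
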